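(* Let $\mathcal{P}\subseteq[0,1]^n$ be a polytope. If $\mathcal{P}$ is not of the form $\mathcal{P}=[0,1]^n\cap\mathcal{H}$ for some affine subspace $\mathcal{H}\subseteq\mathbb{R}^n$, then no strong Bernoulli factory for $\mathcal{P}$ exists.
   Context: A Bernoulli factory with output set $V$ (for inputs $x=(x_1,\dots,x_n)\in[0,1]^n$) is a (possibly infinite) rooted binary tree in which every internal node is labeled either by an index $i\in[n]$ or by a known constant $c\in(0,1)$, the two edges from an internal node to its children are labeled $0$ and $1$, and every leaf is labeled by an element of $V$. On input $x$, one starts at the root; at an internal node labeled $i$ one flips a fresh independent coin that equals $1$ with probability $x_i$, at a node labeled $c$ a fresh independent coin with bias $c$, and follows the edge labeled by the outcome; on reaching a leaf one outputs its label. $\mathcal{F}(x)$ denotes the random output ($\mathcal{F}(x)=\emptyset$ if no leaf is reached); $\mathcal{F}$ terminates almost surely on $S$ if $\Pr[\mathcal{F}(x)=\emptyset]=0$ for all $x\in S$. For a polytope $\mathcal{P}\subseteq[0,1]^n$ with vertex set $V$ (vertices viewed as vectors in $\mathbb{R}^n$), a strong Bernoulli factory for $\mathcal{P}$ is a Bernoulli factory $\mathcal{F}$ with output set $V$ that terminates almost surely on all of $\mathcal{P}$ and satisfies $\mathbb{E}[\mathcal{F}(x)]=x$ for all $x\in\mathcal{P}$. *)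

theory Defs
  imports "HOL-Analysis.Analysis"
begin

text \<open>Node labels of a Bernoulli factory tree: an internal node flipping the coin of
  input index i, an internal node flipping a coin of known bias c, or a leaf
  with an output label.\<close>
datatype ('i, 'v) bf_node = Coin 'i | Const real | Leaf 'v

text \<open>A (possibly infinite) rooted binary tree: the node at position p, where p is the
  list of edge labels (False = 0, True = 1) on the path from the root.  Only
  reachable positions (all proper prefixes internal) matter.\<close>
type_synonym ('i, 'v) bf_tree = "bool list \<Rightarrow> ('i, 'v) bf_node"

definition unit_cube :: "(real ^ 'n) set" where
  "unit_cube = {x. \<forall>i. 0 \<le> x $ i \<and> x $ i \<le> 1}"

fun is_leaf :: "('i, 'v) bf_node \<Rightarrow> bool" where
  "is_leaf (Leaf v) = True"
| "is_leaf _ = False"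

fun leaf_label :: "('i, 'v) bf_node \<Rightarrow> 'v" where
  "leaf_label (Leaf v) = v"
| "leaf_label _ = undefined"

fun edge_prob :: "('n, 'v) bf_node \<Rightarrow> real ^ 'n \<Rightarrow> bool \<Rightarrow> real" where
  "edge_prob (Coin i) x b = (if b then x $ i else 1 - x $ i)"
| "edge_prob (Const c) x b = (if b then c else 1 - c)"
| "edge_prob (Leaf v) x b = 0"

definition reachable :: "('i, 'v) bf_tree \<Rightarrow> bool list \<Rightarrow> bool" where
  "reachable T p \<longleftrightarrow> (\<forall>k < length p. \<not> is_leaf (T (take k p)))"

definition path_weight :: "('n, 'v) bf_tree \<Rightarrow> real ^ 'n \<Rightarrow> bool list \<Rightarrow> real" where
  "path_weight T x p = (\<Prod>k < length p. edge_prob (T (take k p)) x (p ! k))"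

definition leaf_paths :: "('i, 'v) bf_tree \<Rightarrow> bool list set" where
  "leaf_paths T = {p. reachable T p \<and> is_leaf (T p)}"

definition output_prob :: "('n, 'v) bf_tree \<Rightarrow> real ^ 'n \<Rightarrow> 'v \<Rightarrow> real" where
  "output_prob T x v = infsum (path_weight T x) {p \<in> leaf_paths T. T p = Leaf v}"

definition halt_prob :: "('n, 'v) bf_tree \<Rightarrow> real ^ 'n \<Rightarrow> real" where
  "halt_prob T x = infsum (path_weight T x) (leaf_paths T)"

definition bf_expectation :: "('n, real ^ 'n) bf_tree \<Rightarrow> real ^ 'n \<Rightarrow> real ^ 'n" where
  "bf_expectation T x = infsum (\<lambda>p. path_weight T x p *\<^sub>R leaf_label (T p)) (leaf_paths T)"

definition bernoulli_factory :: "('n, 'v) bf_tree \<Rightarrow> 'v set \<Rightarrow> bool" where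
  "bernoulli_factory T V \<longleftrightarrow>
     (\<forall>p. reachable T p \<longrightarrow>
        (\<forall>c. T p = Const c \<longrightarrow> 0 < c \<and> c < 1) \<and>
        (\<forall>v. T p = Leaf v \<longrightarrow> v \<in> V))"

definition terminates_as :: "('n, 'v) bf_tree \<Rightarrow> (real ^ 'n) set \<Rightarrow> bool" where
  "terminates_as T S \<longleftrightarrow> (\<forall>x \<in> S. halt_prob T x = 1)"

definition strong_bernoulli_factory :: "(real ^ 'n) set \<Rightarrow> ('n, real ^ 'n) bf_tree \<Rightarrow> bool" where
  "strong_bernoulli_factory P T \<longleftrightarrow>
     bernoulli_factory T {v. v extreme_point_of P} \<and>
     terminates_as T P \<and>
     (\<forall>x \<in> P. bf_expectation T x = x)"

end

theory Submission
  imports Defs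
begin

definition same_pat :: "real ^ 'n \<Rightarrow> real ^ 'n \<Rightarrow> bool" where
  "same_pat x y \<longleftrightarrow> (\<forall>i. (x $ i = 0 \<longleftrightarrow> y $ i = 0) \<and> (x $ i = 1 \<longleftrightarrow> y $ i = 1))"

definition qq :: "('n, real ^ 'n) bf_tree \<Rightarrow> real ^ 'n \<Rightarrow> real ^ 'n \<Rightarrow> real" where
  "qq T x v = infsum (path_weight T x) {p \<in> leaf_paths T. leaf_label (T p) = v}"

lemma leaf_prefix:
  assumes "p \<in> leaf_paths T" "k < length p"
  shows "reachable T (take k p) \<and> \<not> is_leaf (T (take k p))"
  using assms unfolding leaf_paths_def reachable_def
  by (auto simp: min_def)

lemma edge_nonneg:
  assumes "bernoulli_factory T V" "x \<in> unit_cube" "reachable T q" "\<not> is_leaf (T q)"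
  shows "0 \<le> edge_prob (T q) x b"
proof (cases "T q")
  case (Coin i)
  then show ?thesis using assms(2) by (auto simp: unit_cube_def)
next
  case (Const c)
  then have "0 < c \<and> c < 1" using assms(1,3) unfolding bernoulli_factory_def by blast
  then show ?thesis using Const by auto
next
  case (Leaf v)
  then show ?thesis using assms(4) by simp
qed

lemma edge_pos_iff:
  assumes "x \<in> unit_cube" "y \<in> unit_cube" "same_pat x y"
  shows "0 < edge_prob nd x b \<longleftrightarrow> 0 < edge_prob nd y b"
proof (cases nd)
  case (Coin i)
  have "0 \<le> x $ i" "x $ i \<le> 1" "0 \<le> y $ i" "y $ i \<le> 1" using assms(1,2) by (auto simp: unit_cube_def)
  moreover have "(x $ i = 0 \<longleftrightarrow> y $ i = 0) \<and> (x $ i = 1 \<longleftrightarrow> y $ i = 1)"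
    using assms(3) by (auto simp: same_pat_def)
  ultimately show ?thesis using Coin by auto
qed auto

lemma w_nonneg:
  assumes "bernoulli_factory T V" "x \<in> unit_cube" "p \<in> leaf_paths T"
  shows "0 \<le> path_weight T x p"
  unfolding path_weight_def
  by (rule prod_nonneg) (use assms leaf_prefix edge_nonneg in blast)

lemma w_pos_iff:
  assumes "bernoulli_factory T V" "x \<in> unit_cube" "p \<in> leaf_paths T"
  shows "0 < path_weight T x p \<longleftrightarrow> (\<forall>k < length p. 0 < edge_prob (T (take k p)) x (p ! k))"
proof
  assume h: "0 < path_weight T x p"
  show "\<forall>k < length p. 0 < edge_prob (T (take k p)) x (p ! k)"
  proof (intro allI impI)
    fix k assume k: "k < length p"
    have nn: "0 \<le> edge_prob (T (take k p)) x (p ! k)"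
      using assms leaf_prefix[OF assms(3) k] edge_nonneg by blast
    show "0 < edge_prob (T (take k p)) x (p ! k)"
    proof (rule ccontr)
      assume "\<not> ?thesis"
      then have "edge_prob (T (take k p)) x (p ! k) = 0" using nn by simp
      then have "path_weight T x p = 0" unfolding path_weight_def
        using k by (intro prod_zero) auto
      then show False using h by simp
    qed
  qed
next
  assume "\<forall>k < length p. 0 < edge_prob (T (take k p)) x (p ! k)"
  then show "0 < path_weight T x p" unfolding path_weight_def by (intro prod_pos) auto
qed

lemma w_pos_pat:
  assumes "bernoulli_factory T V" "x \<in> unit_cube" "y \<in> unit_cube" "same_pat x y" "p \<in> leaf_paths T"
  shows "0 < path_weight T x p \<longleftrightarrow> 0 < path_weight T y p"
  by (simp only: w_pos_iff[OF assms(1,2,5)] w_pos_iff[OF assms(1,3,5)] edge_pos_iff[OF assms(2,3,4)])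

lemma decomp:
  fixes T :: "('n, real ^ 'n) bf_tree"
  assumes bf: "bernoulli_factory T V" and fin: "finite V"
    and sm: "path_weight T x summable_on leaf_paths T"
  shows "halt_prob T x = (\<Sum>v\<in>V. qq T x v)"
    and "bf_expectation T x = (\<Sum>v\<in>V. qq T x v *\<^sub>R v)"
proof -
  define L where "L = leaf_paths T"
  define w where "w = path_weight T x"
  define f where "f = (\<lambda>p. path_weight T x p *\<^sub>R leaf_label (T p))"
  define LA where "LA A = {p \<in> L. leaf_label (T p) \<in> A}" for A
  have smsub: "w summable_on B" if "B \<subseteq> L" for B
    using summable_on_subset_banach[OF sm] that unfolding w_def L_def by blast
  have single: "LA {a} = {p \<in> leaf_paths T. leaf_label (T p) = a}" for a
    unfolding LA_def L_def by auto
  have ind: "w summable_on LA A \<and> infsum w (LA A) = (\<Sum>v\<in>A. qq T x v)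
       \<and> f summable_on LA A \<and> infsum f (LA A) = (\<Sum>v\<in>A. qq T x v *\<^sub>R v)"
    if "finite A" for A
    using that
  proof (induction A rule: finite_induct)
    case empty
    have "LA {} = {}" unfolding LA_def by auto
    then show ?case by simp
  next
    case (insert a A)
    have un: "LA (insert a A) = LA {a} \<union> LA A" and dj: "LA {a} \<inter> LA A = {}"
      unfolding LA_def using insert(2) by auto
    have wa: "w summable_on LA {a}" by (rule smsub) (auto simp: LA_def)
    have wia: "infsum w (LA {a}) = qq T x a" unfolding qq_def w_def single by simp
    have feq: "f p = w p *\<^sub>R a" if "p \<in> LA {a}" for p
      using that unfolding f_def w_def LA_def by auto
    have fa: "f summable_on LA {a}"
    proof -
      have "(\<lambda>p. w p *\<^sub>R a) summable_on LA {a}" by (intro summable_on_scaleR_left) (rule wa)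
      then show ?thesis by (subst summable_on_cong[OF feq])
    qed
    have fia: "infsum f (LA {a}) = qq T x a *\<^sub>R a"
    proof -
      have "infsum f (LA {a}) = infsum (\<lambda>p. w p *\<^sub>R a) (LA {a})" by (rule infsum_cong[OF feq])
      also have "\<dots> = infsum w (LA {a}) *\<^sub>R a" by (rule infsum_scaleR_left) (rule wa)
      finally show ?thesis using wia by simp
    qed
    have s1: "w summable_on LA (insert a A)" unfolding un
      by (rule summable_on_Un_disjoint[OF wa _ dj]) (use insert(3) in blast)
    have s2: "infsum w (LA (insert a A)) = (\<Sum>v\<in>insert a A. qq T x v)" unfolding un
      using infsum_Un_disjoint[OF wa _ dj] insert(1,2,3) wia by simp
    have s3: "f summable_on LA (insert a A)" unfolding un
      by (rule summable_on_Un_disjoint[OF fa _ dj]) (use insert(3) in blast)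
    have s4: "infsum f (LA (insert a A)) = (\<Sum>v\<in>insert a A. qq T x v *\<^sub>R v)" unfolding un
      using infsum_Un_disjoint[OF fa _ dj] insert(1,2,3) fia by simp
    show ?case using s1 s2 s3 s4 by blast
  qed
  have LV: "LA V = L"
  proof -
    have "leaf_label (T p) \<in> V" if "p \<in> L" for p
    proof -
      from that have r: "reachable T p" "is_leaf (T p)" unfolding L_def leaf_paths_def by auto
      then obtain v where "T p = Leaf v" by (cases "T p") auto
      then show ?thesis using bf r unfolding bernoulli_factory_def by auto
    qed
    then show ?thesis unfolding LA_def by auto
  qed
  show "halt_prob T x = (\<Sum>v\<in>V. qq T x v)"
    using ind[OF fin] unfolding LV halt_prob_def w_def L_def by simp
  show "bf_expectation T x = (\<Sum>v\<in>V. qq T x v *\<^sub>R v)"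
    using ind[OF fin] unfolding LV bf_expectation_def f_def L_def by simp
qed

lemma qq_nonneg:
  assumes "bernoulli_factory T V" "x \<in> unit_cube"
  shows "0 \<le> qq T x v"
  unfolding qq_def by (rule infsum_nonneg) (use w_nonneg[OF assms] in auto)

lemma qq_pos_iff:
  assumes bf: "bernoulli_factory T V" and x: "x \<in> unit_cube"
    and sm: "path_weight T x summable_on leaf_paths T"
  shows "0 < qq T x v \<longleftrightarrow> (\<exists>p \<in> leaf_paths T. leaf_label (T p) = v \<and> 0 < path_weight T x p)"
proof -
  define B where "B = {p \<in> leaf_paths T. leaf_label (T p) = v}"
  have smB: "path_weight T x summable_on B"
    by (rule summable_on_subset_banach[OF sm]) (auto simp: B_def)
  have nn: "\<And>p. p \<in> B \<Longrightarrow> 0 \<le> path_weight T x p" using w_nonneg[OF bf x] unfolding B_def by auto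
  show ?thesis
  proof
    assume h: "0 < qq T x v"
    have "\<exists>p\<in>B. path_weight T x p \<noteq> 0"
    proof (rule ccontr)
      assume "\<not> (\<exists>p\<in>B. path_weight T x p \<noteq> 0)"
      then have "infsum (path_weight T x) B = 0" by (intro infsum_0) blast
      then show False using h unfolding qq_def B_def by simp
    qed
    then obtain p where "p \<in> B" "path_weight T x p \<noteq> 0" by blast
    moreover have "0 \<le> path_weight T x p" using nn \<open>p \<in> B\<close> .
    ultimately show "\<exists>p \<in> leaf_paths T. leaf_label (T p) = v \<and> 0 < path_weight T x p"
      unfolding B_def by auto
  next
    assume "\<exists>p \<in> leaf_paths T. leaf_label (T p) = v \<and> 0 < path_weight T x p"
    then obtain p where p: "p \<in> B" "0 < path_weight T x p" unfolding B_def by auto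
    have "0 \<le> infsum (path_weight T x) B" by (rule infsum_nonneg) (use nn in auto)
    moreover have "\<not> infsum (path_weight T x) B \<le> 0"
    proof
      assume "infsum (path_weight T x) B \<le> 0"
      from nonneg_infsum_le_0D[OF this smB nn p(1)] show False using p(2) by simp
    qed
    ultimately show "0 < qq T x v" unfolding qq_def B_def by simp
  qed
qed


lemma summable_of_halt:
  assumes "halt_prob T x = 1"
  shows "path_weight T x summable_on leaf_paths T"
proof (rule ccontr)
  assume "\<not> ?thesis"
  then have "halt_prob T x = 0" unfolding halt_prob_def by (rule infsum_not_exists)
  then show False using assms by simp
qed

theorem theorem4p2:
  fixes P :: "(real ^ 'n) set"
  assumes "polytope P"
    and "P \<subseteq> unit_cube"
    and "\<not> (\<exists>H :: (real ^ 'n) set. affine H \<and> P = unit_cube \<inter> H)"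
  shows "\<not> (\<exists>T :: ('n, real ^ 'n) bf_tree. strong_bernoulli_factory P T)"
proof
  assume "\<exists>T :: ('n, real ^ 'n) bf_tree. strong_bernoulli_factory P T"
  then obtain T :: "('n, real ^ 'n) bf_tree" where sbf: "strong_bernoulli_factory P T" by blast
  define V where "V = {v. v extreme_point_of P}"
  have bf: "bernoulli_factory T V" and trm: "terminates_as T P"
    and expc: "\<And>x. x \<in> P \<Longrightarrow> bf_expectation T x = x"
    using sbf unfolding strong_bernoulli_factory_def V_def by auto
  obtain S where S: "finite S" "P = convex hull S" using assms(1) unfolding polytope_def by blast
  have finV: "finite V"
    by (rule finite_subset[OF _ S(1)]) (use extreme_point_of_convex_hull S(2) V_def in blast)
  have PV: "P = convex hull V" using Krein_Milman_polytope[OF S(1)] S(2) V_def by simp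
  have Pne: "P \<noteq> {}"
  proof
    assume "P = {}"
    then have "affine {} \<and> P = unit_cube \<inter> {}" by simp
    then show False using assms(3) by blast
  qed
  have Vne: "V \<noteq> {}" using Pne PV by auto
  have VP: "V \<subseteq> P" unfolding V_def by (auto simp: extreme_point_of_def)
  have Pc: "P \<subseteq> unit_cube" by (rule assms(2))
  have compP: "compact P" using S finite_imp_compact_convex_hull by blast
  have smP: "path_weight T y summable_on leaf_paths T" if "y \<in> P" for y
    using trm that unfolding terminates_as_def by (intro summable_of_halt) blast
  have comb: "sum (qq T y) V = 1 \<and> (\<Sum>v\<in>V. qq T y v *\<^sub>R v) = y" if "y \<in> P" for y
    using decomp[OF bf finV smP[OF that]] trm expc[OF that] that
    unfolding terminates_as_def by auto
  have qnn: "0 \<le> qq T y v" if "y \<in> P" for y v using qq_nonneg[OF bf] that Pc by blast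
  have qle1: "qq T y v \<le> 1" if "y \<in> P" "v \<in> V" for y v
  proof -
    have "qq T y v \<le> sum (qq T y) V" by (rule member_le_sum) (use that qnn finV in auto)
    then show ?thesis using comb[OF that(1)] by simp
  qed
  have qpat: "0 < qq T y v \<longleftrightarrow> 0 < qq T y' v"
    if "y \<in> P" "y' \<in> P" "same_pat y y'" for y y' v
    using qq_pos_iff[OF bf _ smP[OF that(1)]] qq_pos_iff[OF bf _ smP[OF that(2)]]
      w_pos_pat[OF bf _ _ that(3)] that Pc by blast
  define N where "N = real (card V)"
  have Npos: "N > 0" using finV Vne unfolding N_def by (simp add: card_gt_0_iff)
  define x0 where "x0 = (\<Sum>v\<in>V. (1 / N) *\<^sub>R v)"
  have x0P: "x0 \<in> P"
  proof -
    have "x0 \<in> convex hull V"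
      unfolding convex_hull_finite[OF finV]
      by (rule CollectI, rule exI[of _ "\<lambda>_. 1 / N"]) (use Npos in \<open>auto simp: x0_def N_def\<close>)
    then show ?thesis using PV by simp
  qed
  have x0i: "x0 $ i = (\<Sum>v\<in>V. v $ i) / N" for i
    unfolding x0_def by (simp add: sum_divide_distrib)
  define C where "C = {u :: real ^ 'n. \<forall>i. (x0 $ i = 0 \<longrightarrow> u $ i = 0) \<and> (x0 $ i = 1 \<longrightarrow> u $ i = 1)}"
  have affC: "affine C"
    unfolding affine_def C_def by auto
  have VC: "V \<subseteq> C"
  proof
    fix v assume v: "v \<in> V"
    have cube: "\<And>v'. v' \<in> V \<Longrightarrow> 0 \<le> v' $ i \<and> v' $ i \<le> 1" for i
      using VP Pc unfolding unit_cube_def by blast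
    show "v \<in> C" unfolding C_def mem_Collect_eq
    proof (intro allI conjI impI)
      fix i assume "x0 $ i = 0"
      then have "(\<Sum>v\<in>V. v $ i) = 0" using x0i[of i] Npos by simp
      then show "v $ i = 0" using sum_nonneg_eq_0_iff[OF finV, of "\<lambda>v. v $ i"] cube v by blast
    next
      fix i assume "x0 $ i = 1"
      then have "(\<Sum>v\<in>V. v $ i) = N" using x0i[of i] Npos by simp
      then have "(\<Sum>v\<in>V. 1 - v $ i) = 0" by (simp add: sum_subtractf N_def)
      then show "v $ i = 1" using sum_nonneg_eq_0_iff[OF finV, of "\<lambda>v. 1 - v $ i"] cube v by auto
    qed
  qed
  have affP: "affine hull P \<subseteq> C"
    using PV hull_minimal[of V C affine, OF VC affC] by simp
  have main: "unit_cube \<inter> affine hull P \<subseteq> P"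
  proof
    fix z assume "z \<in> unit_cube \<inter> affine hull P"
    then have zc: "z \<in> unit_cube" and zaff: "z \<in> affine hull V" using PV by auto
    have zC: "z \<in> C" using zaff affP PV by auto
    obtain \<alpha> where al: "sum \<alpha> V = 1" "(\<Sum>v\<in>V. \<alpha> v *\<^sub>R v) = z"
      using zaff unfolding affine_hull_finite[OF finV] by blast
    define xt where "xt t = x0 + t *\<^sub>R (z - x0)" for t
    define A where "A = (\<Sum>v\<in>V. \<bar>\<alpha> v\<bar>)"
    have A0: "0 \<le> A" unfolding A_def by (rule sum_nonneg) auto
    have NA: "0 \<le> N * A" using Npos A0 by simp
    define \<delta> where "\<delta> = 1 / (1 + N * A)"
    have dpos: "0 < \<delta>" unfolding \<delta>_def using NA by simp
    have dle: "\<delta> \<le> 1" unfolding \<delta>_def using NA by simp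
    have dA0: "1 - \<delta> = N * (\<delta> * A)" unfolding \<delta>_def using NA by (simp add: field_simps)
    have dA: "(1 - \<delta>) / N = \<delta> * A" using dA0 Npos by simp
    have xtd: "xt \<delta> \<in> P"
    proof -
      define u where "u v = (1 - \<delta>) / N + \<delta> * \<alpha> v" for v
      have "u v \<ge> 0" if "v \<in> V" for v
      proof -
        have "\<bar>\<alpha> v\<bar> \<le> A" unfolding A_def by (rule member_le_sum) (use that finV in auto)
        then have "- A \<le> \<alpha> v" by (simp add: abs_le_iff)
        then have "\<delta> * (- A) \<le> \<delta> * \<alpha> v" by (rule mult_left_mono) (use dpos in simp)
        then have "- (\<delta> * A) \<le> \<delta> * \<alpha> v" by simp
        then show ?thesis unfolding u_def dA by simp
      qed
      moreover have "sum u V = 1" unfolding u_def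
        using al(1) Npos by (simp add: sum.distrib sum_distrib_left[symmetric] N_def)
      moreover have "(\<Sum>v\<in>V. u v *\<^sub>R v) = xt \<delta>"
      proof -
        have "(\<Sum>v\<in>V. u v *\<^sub>R v) = (\<Sum>v\<in>V. ((1 - \<delta>) / N) *\<^sub>R v) + \<delta> *\<^sub>R (\<Sum>v\<in>V. \<alpha> v *\<^sub>R v)"
          unfolding u_def by (simp add: scaleR_add_left sum.distrib scaleR_sum_right)
        also have "(\<Sum>v\<in>V. ((1 - \<delta>) / N) *\<^sub>R v) = (1 - \<delta>) *\<^sub>R x0"
          unfolding x0_def scaleR_sum_right by (simp add: divide_inverse)
        finally show ?thesis unfolding al(2) xt_def by (simp add: algebra_simps)
      qed
      ultimately have "xt \<delta> \<in> convex hull V"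
        unfolding convex_hull_finite[OF finV] by blast
      then show ?thesis using PV by simp
    qed
    define TT where "TT = {0..1} \<inter> xt -` P"
    have cTT: "compact TT"
    proof -
      have "closed (xt -` P)"
      proof (rule continuous_closed_vimage)
        show "closed P" using compP by (rule compact_imp_closed)
        have xt_eq: "xt = (\<lambda>t. x0 + t *\<^sub>R (z - x0))" by (rule ext) (simp add: xt_def)
        show "continuous (at t) xt" for t unfolding xt_eq by (intro continuous_intros)
      qed
      then show ?thesis unfolding TT_def by (intro compact_Int_closed) auto
    qed
    have dTT: "\<delta> \<in> TT" unfolding TT_def using dpos dle xtd by auto
    obtain s where sT: "s \<in> TT" and smax: "\<And>t. t \<in> TT \<Longrightarrow> t \<le> s"
      using compact_attains_sup[OF cTT] dTT by blast
    have spos: "s > 0" using smax[OF dTT] dpos by simp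
    have s1: "s \<le> 1" using sT unfolding TT_def by simp
    show "z \<in> P"
    proof (cases "s = 1")
      case True
      then show ?thesis using sT unfolding TT_def xt_def by simp
    next
      case False
      then have slt: "s < 1" using s1 by simp
      define y where "y = xt s"
      have yP: "y \<in> P" using sT unfolding TT_def y_def by simp
      have pat: "same_pat x0 y" unfolding same_pat_def
      proof
        fix i
        have x0c: "0 \<le> x0 $ i" "x0 $ i \<le> 1" using x0P Pc unfolding unit_cube_def by auto
        have zcc: "0 \<le> z $ i" "z $ i \<le> 1" using zc unfolding unit_cube_def by auto
        have yi: "y $ i = (1 - s) * x0 $ i + s * z $ i" unfolding y_def xt_def by (simp add: algebra_simps)
        show "(x0 $ i = 0 \<longleftrightarrow> y $ i = 0) \<and> (x0 $ i = 1 \<longleftrightarrow> y $ i = 1)"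
        proof (cases "x0 $ i = 0 \<or> x0 $ i = 1")
          case True
          then show ?thesis using zC yi unfolding C_def by auto
        next
          case False
          then have "0 < x0 $ i" "x0 $ i < 1" using x0c by auto
          then have "0 < (1 - s) * x0 $ i" "(1 - s) * x0 $ i < 1 - s" using slt by auto
          moreover have "0 \<le> s * z $ i" "s * z $ i \<le> s" using zcc spos
            by (auto simp: mult_left_le)
          ultimately have "0 < y $ i" "y $ i < 1" unfolding yi by linarith+
          then show ?thesis using False by auto
        qed
      qed
      define M where "M = insert ((1 - s) / s) (qq T y ` {v \<in> V. 0 < qq T y v})"
      have finM: "finite M" unfolding M_def using finV by simp
      have Mne: "M \<noteq> {}" unfolding M_def by simp
      have Mpos: "\<forall>a\<in>M. 0 < a" unfolding M_def using spos slt by auto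
      define \<epsilon> where "\<epsilon> = Min M"
      have epos: "0 < \<epsilon>" unfolding \<epsilon>_def using Min_gr_iff[OF finM Mne] Mpos by blast
      have e1: "\<epsilon> \<le> (1 - s) / s" unfolding \<epsilon>_def by (rule Min_le[OF finM]) (simp add: M_def)
      have e2: "\<epsilon> \<le> qq T y v" if "v \<in> V" "0 < qq T y v" for v
        unfolding \<epsilon>_def by (rule Min_le[OF finM]) (use that in \<open>simp add: M_def\<close>)
      define s' where "s' = s * (1 + \<epsilon>)"
      have s'gt: "s < s'" unfolding s'_def using spos epos by simp
      have s'le: "s' \<le> 1"
      proof -
        have "s * \<epsilon> \<le> 1 - s" using e1 spos by (simp add: field_simps)
        then show ?thesis unfolding s'_def by (simp add: algebra_simps)
      qed
      define u where "u v = (1 + \<epsilon>) * qq T y v - \<epsilon> * qq T x0 v" for v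
      have "u v \<ge> 0" if v: "v \<in> V" for v
      proof (cases "0 < qq T y v")
        case True
        have "\<epsilon> * qq T x0 v \<le> \<epsilon>" using qle1[OF x0P v] epos by simp
        also have "\<dots> \<le> qq T y v" using e2[OF v True] .
        also have "\<dots> \<le> (1 + \<epsilon>) * qq T y v" using True epos by simp
        finally show ?thesis unfolding u_def by simp
      next
        case False
        then have "qq T y v = 0" using qnn[OF yP] by (metis order_less_le)
        moreover have "qq T x0 v = 0" using qpat[OF x0P yP pat, of v] False qnn[OF x0P, of v] by simp
        ultimately show ?thesis unfolding u_def by simp
      qed
      moreover have "sum u V = 1" unfolding u_def
        using comb[OF yP] comb[OF x0P] by (simp add: sum_subtractf sum_distrib_left[symmetric])
      moreover have "(\<Sum>v\<in>V. u v *\<^sub>R v) = xt s'"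
      proof -
        have "(\<Sum>v\<in>V. u v *\<^sub>R v) = (1 + \<epsilon>) *\<^sub>R (\<Sum>v\<in>V. qq T y v *\<^sub>R v) - \<epsilon> *\<^sub>R (\<Sum>v\<in>V. qq T x0 v *\<^sub>R v)"
          unfolding u_def by (simp add: scaleR_diff_left sum_subtractf scaleR_sum_right)
        also have "\<dots> = (1 + \<epsilon>) *\<^sub>R y - \<epsilon> *\<^sub>R x0" using comb[OF yP] comb[OF x0P] by simp
        finally show ?thesis unfolding y_def xt_def s'_def by (simp add: algebra_simps)
      qed
      ultimately have "xt s' \<in> convex hull V"
        unfolding convex_hull_finite[OF finV] by blast
      then have "s' \<in> TT" unfolding TT_def using PV s'le s'gt spos by simp
      then show ?thesis using smax s'gt by fastforce
    qed
  qed
  have "P = unit_cube \<inter> affine hull P" using main Pc hull_subset[of P affine] by blast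
  then show False using assms(3) affine_affine_hull by blast
qed

end
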